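(* Let $p$ be a prime number, let $X$ be a nonempty totally ordered set, and let $s$ be an integer with $1\leq s<p$. Then the images of the Lyndon words of length $s$ over $X$ generate the $\mathbb{Z}/p$-module $\mathrm{Sh}_{\mathbb{Z}}(X)_{\mathrm{indec},s}\otimes(\mathbb{Z}/p)$.
   Context: $X^*$ is the free monoid on $X$, whose elements are regarded as associative words in the alphabet $X$; $|w|$ denotes the length of a word $w$, and $X^s$ the set of words of length $s$. $X^*$ carries the alphabetical (lexicographic) order induced by the total order on $X$. A nonempty word $w$ is a Lyndon word if it is strictly smaller in this order than all its nontrivial proper right factors (suffixes). $\mathbb{Z}\langle X\rangle$ is the free $\mathbb{Z}$-module with basis $X^*$, graded by word length. The shuffle product of words $u=(x_1\cdots x_r)$ and $v=(x_{r+1}\cdots x_{r+t})$ is $u\,ш\,v=\sum_\sigma (x_{\sigma(1)}\cdots x_{\sigma(r+t)})$, summing over all permutations $\sigma$ of $1,\dots,r+t$ with $\sigma(1)<\cdots<\sigma(r)$ and $\sigma(r+1)<\cdots<\sigma(r+t)$; extended bilinearly it makes $\mathbb{Z}\langle X\rangle$ into the shuffle algebra $\mathrm{Sh}_{\mathbb{Z}}(X)$. Let $M$ be the $\mathbb{Z}$-submodule of $\mathbb{Z}\langle X\rangle$ generated by all $u\,ш\,v$ with $u,v\in X^*$ nonempty words. The indecomposable quotient is $\mathrm{Sh}_{\mathbb{Z}}(X)_{\mathrm{indec}}=\mathbb{Z}\langle X\rangle/M$, graded by word length; $\mathrm{Sh}_{\mathbb{Z}}(X)_{\mathrm{indec},s}$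 is its degree-$s$ component, and the "image" of a word $w\in X^s$ means the image of $w$ under $\mathbb{Z}\langle X\rangle_s\to \mathrm{Sh}_{\mathbb{Z}}(X)_{\mathrm{indec},s}\to \mathrm{Sh}_{\mathbb{Z}}(X)_{\mathrm{indec},s}\otimes(\mathbb{Z}/p)$. *)

theory Defs
  imports "HOL-Computational_Algebra.Primes"
begin

text \<open>Elements of the free Z-module Z<X> with basis the
words are represented as integer-valued functions on words (all elements considered below are
finitely supported, being integer combinations of basis words).\<close>

definition wordvec :: "'a list \<Rightarrow> ('a list \<Rightarrow> int)" where
  "wordvec w = (\<lambda>x. if x = w then 1 else 0)"

text \<open>shc u v w = number of shuffle permutations sigma of u and v producing w,
i.e. the coefficient of w in the shuffle product u sh v (standard recursion
(a u) sh (b v) = a (u sh b v) + b (a u sh v)).\<close>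

fun shc :: "'a list \<Rightarrow> 'a list \<Rightarrow> 'a list \<Rightarrow> nat" where
  "shc [] v w = (if v = w then 1 else 0)"
| "shc (a # u) [] w = (if a # u = w then 1 else 0)"
| "shc (a # u) (b # v) [] = 0"
| "shc (a # u) (b # v) (c # w) =
     (if a = c then shc u (b # v) w else 0) + (if b = c then shc (a # u) v w else 0)"

definition shuffle :: "'a list \<Rightarrow> 'a list \<Rightarrow> ('a list \<Rightarrow> int)" where
  "shuffle u v = (\<lambda>w. int (shc u v w))"

definition word_less :: "'a::linorder list \<Rightarrow> 'a list \<Rightarrow> bool" where
  "word_less u v \<longleftrightarrow> (u, v) \<in> lexord {(x, y). x < y}"

definition lyndon :: "'a::linorder list \<Rightarrow> bool" where
  "lyndon w \<longleftrightarrow> w \<noteq> [] \<and> (\<forall>k. 0 < k \<and> k < length w \<longrightarrow> word_less w (drop k w))"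

inductive_set zspan :: "('b \<Rightarrow> int) set \<Rightarrow> ('b \<Rightarrow> int) set" for S where
  zero: "(\<lambda>_. 0) \<in> zspan S"
| base: "f \<in> S \<Longrightarrow> f \<in> zspan S"
| add: "f \<in> zspan S \<Longrightarrow> g \<in> zspan S \<Longrightarrow> (\<lambda>x. f x + g x) \<in> zspan S"
| smult: "f \<in> zspan S \<Longrightarrow> (\<lambda>x. c * f x) \<in> zspan S"

definition shuffle_gens :: "('a list \<Rightarrow> int) set" where
  "shuffle_gens = {shuffle u v | u v. u \<noteq> [] \<and> v \<noteq> []}"

definition p_multiples :: "nat \<Rightarrow> ('a list \<Rightarrow> int) set" where
  "p_multiples p = {(\<lambda>x. int p * wordvec w x) | w. True}"

end

theory Submission
  imports Defs "HOL-Library.List_Lexorder"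
begin

fun sgt :: "'a::linorder list \<Rightarrow> 'a list \<Rightarrow> bool" where
  "sgt (x # xs) (y # ys) = (y < x \<or> (x = y \<and> sgt xs ys))"
| "sgt _ _ = False"

lemma sgt_less: "sgt a b \<Longrightarrow> b < a"
  by (induction a b rule: sgt.induct) auto

lemma sgt_app: "sgt a b \<Longrightarrow> sgt (a @ x) (b @ y)"
  by (induction a b rule: sgt.induct) auto

lemma sgt_app_less: "sgt a b \<Longrightarrow> b @ y < a @ x"
  using sgt_app sgt_less by blast

lemma sgt_prefix: "sgt (P @ a) (P @ b) = sgt a b"
  by (induction P) auto

lemma sgt_asym: "sgt a b \<Longrightarrow> \<not> sgt b a"
  by (induction a b rule: sgt.induct) auto

lemma sgt_nonempty: "sgt a b \<Longrightarrow> a \<noteq> [] \<and> b \<noteq> []"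
  by (cases a; cases b) auto

lemma le_cases: "(b::'a::linorder list) \<le> a \<Longrightarrow> sgt a b \<or> (\<exists>z. a = b @ z)"
proof (induction a arbitrary: b)
  case Nil then show ?case by simp
next
  case (Cons x a)
  then show ?case by (cases b) (auto simp: less_le_not_le)
qed

lemma less_cases: "(a::'a::linorder list) < b \<Longrightarrow> sgt b a \<or> (\<exists>z. z \<noteq> [] \<and> b = a @ z)"
proof (induction a arbitrary: b)
  case Nil then show ?case by (cases b) auto
next
  case (Cons x a)
  then show ?case by (cases b) auto
qed

lemma prefix_le: "(b::'a::linorder list) \<le> b @ z"
  by (induction b) auto

lemma app_le_mono: "(x::'a::linorder list) \<le> y \<Longrightarrow> P @ x \<le> P @ y"
  by (induction P) auto

lemma app_less_mono: "(x::'a::linorder list) < y \<Longrightarrow> P @ x < P @ y"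
  by (induction P) auto

lemma app_le_cancel: "P @ (x::'a::linorder list) \<le> P @ y \<Longrightarrow> x \<le> y"
  by (induction P) auto

lemma shorter_less_sgt: "(b::'a::linorder list) < a \<Longrightarrow> length a < length b \<Longrightarrow> sgt a b"
  using less_cases by fastforce

lemma Cons_less_first: "(c::'a::linorder) < d \<Longrightarrow> c # x < d # y"
  by simp


section \<open>shuffle coefficients\<close>

lemma shc_Nil2[simp]: "shc u [] w = (if u = w then 1 else 0)"
  by (cases u) auto

lemma shc_sym: "shc u v w = shc v u w"
  by (induction u v w rule: shc.induct) (auto split: if_splits)

lemma shc_mset: "shc u v x \<noteq> 0 \<Longrightarrow> mset x = mset u + mset v"
  by (induction u v x rule: shc.induct) (auto split: if_splits)

lemma shc_app_pos: "shc u v (u @ v) \<ge> 1"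
proof (induction u)
  case Nil then show ?case by simp
next
  case (Cons a u)
  then show ?case by (cases v) auto
qed

fun mx :: "'a::linorder list \<Rightarrow> 'a list \<Rightarrow> 'a list" where
  "mx [] v = v"
| "mx (a # u) [] = a # u"
| "mx (a # u) (b # v) = max (a # mx u (b # v)) (b # mx (a # u) v)"

lemma mx_Nil2[simp]: "mx u [] = u"
  by (cases u) auto

lemma mx_sym: "mx u v = mx v u"
  by (induction u v rule: mx.induct) (auto simp: max.commute)

lemma shc_le_mx: "shc u v x \<noteq> 0 \<Longrightarrow> x \<le> mx u v"
proof (induction u v x rule: shc.induct)
  case (4 a u b v c w)
  then show ?case
    by (auto split: if_splits simp: le_max_iff_disj)
qed (auto split: if_splits)

lemma mx_ge_left: "c # mx x y \<le> mx (c # x) y"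
  by (cases y) auto

lemma mx_ge_right: "c # mx x y \<le> mx x (c # y)"
  by (cases x) auto

lemma mx_Cons_Cons_le: "mx (a # u) (b # v) \<le> z \<longleftrightarrow> a # mx u (b # v) \<le> z \<and> b # mx (a # u) v \<le> z"
  by simp

lemma mx_Cons_Cons_less: "mx (a # u) (b # v) < z \<longleftrightarrow> a # mx u (b # v) < z \<and> b # mx (a # u) v < z"
  by simp

lemma phi_aux:
  "\<forall>P a b. length a + length b = n \<longrightarrow> (b::'a::linorder list) \<le> a \<longrightarrow> mx (P @ a) b \<le> mx a (P @ b)"
proof (induction n rule: less_induct)
  case (less n)
  show ?case
  proof (intro allI impI)
    fix P a b :: "'a list"
    assume n: "length a + length b = n" and ba: "b \<le> a"
    show "mx (P @ a) b \<le> mx a (P @ b)"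
    proof (induction P)
      case Nil then show ?case by simp
    next
      case (Cons q P)
      show ?case
      proof (cases b)
        case Nil
        have "shc a (q # P) (q # P @ a) \<noteq> 0"
          using shc_app_pos[of "q # P" a] shc_sym[of a "q # P"] by auto
        then show ?thesis using Nil shc_le_mx by fastforce
      next
        case (Cons y b')
        then obtain x a' where a: "a = x # a'" using ba by (cases a) auto
        have 1: "q # mx (P @ a) b \<le> mx a ((q # P) @ b)"
        proof -
          have "q # mx (P @ a) b \<le> q # mx a (P @ b)" using Cons.IH by simp
          also have "\<dots> \<le> mx a ((q # P) @ b)" using mx_ge_right[of q a "P @ b"] by simp
          finally show ?thesis .
        qed
        have 2: "y # mx ((q # P) @ a) b' \<le> mx a ((q # P) @ b)"
        proof -
          have "y < x \<or> (y = x \<and> b' \<le> a')" using ba a Cons by auto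
          then show ?thesis
          proof
            assume "y < x"
            then have "y # mx ((q # P) @ a) b' < x # mx a' ((q # P) @ b)" by simp
            also have "\<dots> \<le> mx a ((q # P) @ b)" using a mx_ge_left by blast
            finally show ?thesis by simp
          next
            assume h: "y = x \<and> b' \<le> a'"
            have "mx (((q # P) @ [x]) @ a') b' \<le> mx a' (((q # P) @ [x]) @ b')"
            proof -
              have lt: "length a' + length b' < n" using n a Cons by simp
              show ?thesis using less.IH[OF lt] h by blast
            qed
            then have "y # mx ((q # P) @ a) b' \<le> x # mx a' ((q # P) @ b)"
              using a Cons h by simp
            also have "\<dots> \<le> mx a ((q # P) @ b)" using a mx_ge_left by blast
            finally show ?thesis .
          qed
        qed
        show ?thesis using 1 2 Cons by simp
      qed
    qed
  qed
qed

lemma phi: "(b::'a::linorder list) \<le> a \<Longrightarrow> mx (P @ a) b \<le> mx a (P @ b)"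
  using phi_aux by blast

lemma GL: "(b::'a::linorder list) \<le> a \<Longrightarrow> a = x # a' \<Longrightarrow> mx a b = x # mx a' b"
proof (cases b)
  case Nil
  assume "a = x # a'" then show ?thesis using Nil by simp
next
  case (Cons y b')
  assume ba: "b \<le> a" and a: "a = x # a'"
  have "y # mx a b' \<le> x # mx a' b"
  proof -
    have "y < x \<or> (y = x \<and> b' \<le> a')" using ba a Cons by auto
    then show ?thesis
    proof
      assume "y < x" then show ?thesis by simp
    next
      assume h: "y = x \<and> b' \<le> a'"
      have "mx ([x] @ a') b' \<le> mx a' ([x] @ b')" using phi h by blast
      then show ?thesis using a Cons h by simp
    qed
  qed
  then show ?thesis using a Cons by (simp add: max.absorb1)
qed

lemma mx_concat:
  assumes "\<forall>k < length u. (v::'a::linorder list) \<le> drop k u"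
  shows "mx u v = u @ v"
  using assms
proof (induction u)
  case Nil then show ?case by simp
next
  case (Cons x u)
  have "v \<le> x # u" using Cons.prems by (metis drop0 length_Cons zero_less_Suc)
  moreover have "\<forall>k < length u. v \<le> drop k u"
    using Cons.prems by (metis Suc_less_eq drop_Suc_Cons length_Cons)
  ultimately show ?case using GL[of v "x # u" x u] Cons.IH by auto
qed


lemma phis_aux:
  "\<forall>P a b. length a = n \<longrightarrow> P \<noteq> [] \<longrightarrow>
     (\<forall>k < length (P @ a). sgt (drop k (P @ a)) (P @ b)) \<longrightarrow>
     mx (P @ a) (b::'a::linorder list) < a @ P @ b"
proof (induction n rule: less_induct)
  case (less n)
  show ?case
  proof (intro allI impI)
    fix P a b :: "'a list"
    assume n: "length a = n" and P: "P \<noteq> []" and H: "\<forall>k < length (P @ a). sgt (drop k (P @ a)) (P @ b)"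
    have "sgt (P @ a) (P @ b)" using H[rule_format, of 0] P by simp
    then have sab: "sgt a b" using sgt_prefix by blast
    then obtain x a' y b' where a: "a = x # a'" and b: "b = y # b'"
      using sgt_nonempty by (metis list.exhaust)
    obtain q P' where Pq: "P = q # P'" using P by (cases P) auto
    have saPb: "sgt a (P @ b)" using H[rule_format, of "length P"] a by simp
    have br2: "y # mx (P @ a) b' < a @ P @ b"
    proof -
      have "y < x \<or> (x = y \<and> sgt a' b')" using sab a b by simp
      then show ?thesis
      proof
        assume "y < x" then show ?thesis using a by simp
      next
        assume h: "x = y \<and> sgt a' b'"
        have lt: "length a' < n" using n a by simp
        have "mx ((P @ [x]) @ a') b' < a' @ (P @ [x]) @ b'"
          using less.IH[OF lt, rule_format, of a' "P @ [x]" b'] H a b h by auto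
        then show ?thesis using a b h by simp
      qed
    qed
    have br1: "q # mx (P' @ a) b < a @ P @ b"
    proof -
      have "q < x \<or> (x = q \<and> sgt a' (P' @ b))" using saPb a Pq by simp
      then show ?thesis
      proof
        assume "q < x" then show ?thesis using a by simp
      next
        assume h: "x = q \<and> sgt a' (P' @ b)"
        have "mx (P' @ a) b \<le> mx a (P' @ b)" using phi sgt_less[OF sab] less_imp_le by blast
        also have "mx a (P' @ b) = mx ([x] @ a') (P' @ b)" using a by simp
        also have "\<dots> < a' @ [x] @ P' @ b"
        proof -
          have lt: "length a' < n" using n a by simp
          have "\<forall>k < length ([x] @ a'). sgt (drop k ([x] @ a')) ([x] @ P' @ b)"
          proof (intro allI impI)
            fix k assume "k < length ([x] @ a')"
            then have "k + length P < length (P @ a)" using a by simp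
            then have "sgt (drop (k + length P) (P @ a)) (P @ b)" using H by blast
            then show "sgt (drop k ([x] @ a')) ([x] @ P' @ b)" using a Pq h by simp
          qed
          then show ?thesis using less.IH[OF lt, rule_format, of a' "[x]" "P' @ b"] by simp
        qed
        finally show ?thesis using a Pq h by simp
      qed
    qed
    show "mx (P @ a) b < a @ P @ b"
      using br1 br2 Pq b by simp
  qed
qed

lemma phis:
  "P \<noteq> [] \<Longrightarrow> (\<forall>k < length (P @ a). sgt (drop k (P @ a)) (P @ b)) \<Longrightarrow>
     mx (P @ a) (b::'a::linorder list) < a @ P @ b"
  using phis_aux by blast

definition lyn :: "'a::linorder list \<Rightarrow> bool" where
  "lyn w \<longleftrightarrow> w \<noteq> [] \<and> (\<forall>k. 0 < k \<and> k < length w \<longrightarrow> w < drop k w)"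

lemma lyn_suffix_sgt: "lyn B \<Longrightarrow> 0 < k \<Longrightarrow> k < length B \<Longrightarrow> sgt (drop k B) B"
  unfolding lyn_def using shorter_less_sgt by fastforce

lemma phis2_aux:
  "\<forall>P a b. length a = n \<longrightarrow> P \<noteq> [] \<longrightarrow> lyn (P @ b) \<longrightarrow> sgt (P @ a) (P @ b) \<longrightarrow>
     (\<forall>k. 0 < k \<and> k < length (P @ a) \<longrightarrow> P @ b \<le> drop k (P @ a)) \<longrightarrow>
     mx (P @ a) (b::'a::linorder list) < a @ P @ b"
proof (induction n rule: less_induct)
  case (less n)
  show ?case
  proof (intro allI impI)
    fix P a b :: "'a list"
    assume n: "length a = n" and P: "P \<noteq> []" and L: "lyn (P @ b)" and S: "sgt (P @ a) (P @ b)"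
      and H: "\<forall>k. 0 < k \<and> k < length (P @ a) \<longrightarrow> P @ b \<le> drop k (P @ a)"
    have sab: "sgt a b" using S sgt_prefix by blast
    then obtain x a' y b' where a: "a = x # a'" and b: "b = y # b'"
      using sgt_nonempty by (metis list.exhaust)
    obtain q P' where Pq: "P = q # P'" using P by (cases P) auto
    have saPb: "sgt a (P @ b)"
    proof -
      have "P @ b \<le> a" using H[rule_format, of "length P"] a P by simp
      then have "sgt a (P @ b) \<or> (\<exists>z. a = (P @ b) @ z)" using le_cases by blast
      moreover have "\<not> (\<exists>z. a = (P @ b) @ z)"
      proof
        assume "\<exists>z. a = (P @ b) @ z"
        then obtain z where z: "a = (P @ b) @ z" by blast
        have "sgt (drop (length P) (P @ b)) (P @ b)"
          using lyn_suffix_sgt[OF L, of "length P"] P b by simp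
        then have "sgt b ((P @ b) @ z)" using sgt_app[of b "P @ b" "[]" z] by simp
        then show False using sab z sgt_asym by blast
      qed
      ultimately show ?thesis by blast
    qed
    have br2: "y # mx (P @ a) b' < a @ P @ b"
    proof -
      have "y < x \<or> (x = y \<and> sgt a' b')" using sab a b by simp
      then show ?thesis
      proof
        assume "y < x" then show ?thesis using a by simp
      next
        assume h: "x = y \<and> sgt a' b'"
        have lt: "length a' < n" using n a by simp
        have "mx ((P @ [x]) @ a') b' < a' @ (P @ [x]) @ b'"
          using less.IH[OF lt, rule_format, of a' "P @ [x]" b'] H L S a b h by auto
        then show ?thesis using a b h by simp
      qed
    qed
    have br1: "q # mx (P' @ a) b < a @ P @ b"
    proof -
      have "q < x \<or> (x = q \<and> sgt a' (P' @ b))" using saPb a Pq by simp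
      then show ?thesis
      proof
        assume "q < x" then show ?thesis using a by simp
      next
        assume h: "x = q \<and> sgt a' (P' @ b)"
        have "mx (P' @ a) b \<le> mx a (P' @ b)" using phi sgt_less[OF sab] less_imp_le by blast
        also have "mx a (P' @ b) = mx ([x] @ a') (P' @ b)" using a by simp
        also have "\<dots> < a' @ [x] @ P' @ b"
        proof -
          have lt: "length a' < n" using n a by simp
          have "\<forall>k. 0 < k \<and> k < length ([x] @ a') \<longrightarrow> [x] @ P' @ b \<le> drop k ([x] @ a')"
          proof (intro allI impI)
            fix k assume "0 < k \<and> k < length ([x] @ a')"
            then have "0 < k + length P \<and> k + length P < length (P @ a)" using a by simp
            then have "P @ b \<le> drop (k + length P) (P @ a)" using H by blast
            then show "[x] @ P' @ b \<le> drop k ([x] @ a')" using a Pq h by simp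
          qed
          moreover have "lyn ([x] @ P' @ b)" using L Pq h by simp
          moreover have "sgt ([x] @ a') ([x] @ P' @ b)" using saPb a Pq h by simp
          ultimately show ?thesis using less.IH[OF lt, rule_format, of a' "[x]" "P' @ b"] by simp
        qed
        finally show ?thesis using a Pq h by simp
      qed
    qed
    show "mx (P @ a) b < a @ P @ b"
      using br1 br2 Pq b by simp
  qed
qed

lemma phis2:
  "P \<noteq> [] \<Longrightarrow> lyn (P @ b) \<Longrightarrow> sgt (P @ a) (P @ b) \<Longrightarrow>
     (\<forall>k. 0 < k \<and> k < length (P @ a) \<longrightarrow> P @ b \<le> drop k (P @ a)) \<Longrightarrow>
     mx (P @ a) (b::'a::linorder list) < a @ P @ b"
  using phis2_aux by blast


lemma shc_zero_if_gt: "mx u v < x \<Longrightarrow> shc u v x = 0"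
  using shc_le_mx leD by blast

lemma N_one: "\<forall>k < length p. sgt (drop k p) q \<Longrightarrow> shc p q (p @ (q::'a::linorder list)) = 1"
proof (induction p)
  case Nil then show ?case by simp
next
  case (Cons x p')
  have "sgt (x # p') q" using Cons.prems by (metis drop0 length_Cons zero_less_Suc)
  then obtain y q' where q: "q = y # q'" using sgt_nonempty by (metis list.exhaust)
  have IH: "shc p' q (p' @ q) = 1"
    using Cons.IH Cons.prems by (metis Suc_less_eq drop_Suc_Cons length_Cons)
  have 2: "y = x \<Longrightarrow> shc (x # p') q' (p' @ q) = 0"
  proof -
    assume yx: "y = x"
    have "mx ([x] @ p') q' < p' @ [x] @ q'"
      using phis[of "[x]" p' q'] Cons.prems q yx by simp
    then show ?thesis using shc_zero_if_gt q yx by fastforce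
  qed
  show ?case using IH 2 q by simp
qed

lemma BZ_aux: "\<forall>z. length z = n \<longrightarrow> (\<forall>k < length z. B \<le> drop k z) \<longrightarrow> B \<noteq> [] \<longrightarrow>
    B @ z \<le> z @ (B::'a::linorder list)"
proof (induction n rule: less_induct)
  case (less n)
  show ?case
  proof (intro allI impI)
    fix z :: "'a list"
    assume n: "length z = n" and H: "\<forall>k < length z. B \<le> drop k z" and B: "B \<noteq> []"
    show "B @ z \<le> z @ B"
    proof (cases z)
      case Nil then show ?thesis by simp
    next
      case (Cons c z')
      have "B \<le> z" using H Cons by (metis drop0 length_Cons zero_less_Suc)
      then have "sgt z B \<or> (\<exists>z2. z = B @ z2)" using le_cases by blast
      then show ?thesis
      proof
        assume "sgt z B" then show ?thesis using sgt_app_less less_imp_le by blast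
      next
        assume "\<exists>z2. z = B @ z2"
        then obtain z2 where z2: "z = B @ z2" by blast
        have lt: "length z2 < n" using n z2 B by (cases B) auto
        have "\<forall>k < length z2. B \<le> drop k z2"
        proof (intro allI impI)
          fix k assume "k < length z2"
          then have "k + length B < length z" using z2 by simp
          moreover have "drop (k + length B) z = drop k z2" using z2 by simp
          ultimately show "B \<le> drop k z2" using H by metis
        qed
        then have "B @ z2 \<le> z2 @ B" using less.IH[OF lt] B by blast
        then have "B @ (B @ z2) \<le> B @ (z2 @ B)" by (rule app_le_mono)
        then show ?thesis using z2 by simp
      qed
    qed
  qed
qed

lemma BZ: "(\<forall>k < length z. B \<le> drop k z) \<Longrightarrow> B \<noteq> [] \<Longrightarrow> B @ z \<le> z @ (B::'a::linorder list)"
  using BZ_aux by blast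

lemma count_bound:
  assumes L: "lyn v" and H: "\<forall>k < length u. v \<le> drop k u"
  shows "shc u v (u @ (v::'a::linorder list)) \<le> length u + 1"
  using H
proof (induction u)
  case Nil then show ?case by simp
next
  case (Cons x u')
  obtain y v' where v: "v = y # v'" using L unfolding lyn_def by (cases v) auto
  have IH: "shc u' v (u' @ v) \<le> length u' + 1"
    using Cons.IH Cons.prems by (metis Suc_less_eq drop_Suc_Cons length_Cons)
  have vsuf: "\<And>k. k < length v' \<Longrightarrow> sgt (drop k v') v"
  proof -
    fix k assume "k < length v'"
    then have "sgt (drop (Suc k) v) v" using lyn_suffix_sgt[OF L, of "Suc k"] v by simp
    then show "sgt (drop k v') v" using v by simp
  qed
  have 2: "y = x \<Longrightarrow> shc (x # u') v' (u' @ v) \<le> 1"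
  proof -
    assume yx: "y = x"
    have "v \<le> x # u'" using Cons.prems by (metis drop0 length_Cons zero_less_Suc)
    then have "sgt (x # u') v \<or> (\<exists>z. x # u' = v @ z)" using le_cases by blast
    then show ?thesis
    proof
      assume s: "sgt (x # u') v"
      have "mx ([x] @ u') v' < u' @ [x] @ v'"
      proof (rule phis2)
        show "lyn ([x] @ v')" using L v yx by simp
        show "sgt ([x] @ u') ([x] @ v')" using s v yx by simp
        show "\<forall>k. 0 < k \<and> k < length ([x] @ u') \<longrightarrow> [x] @ v' \<le> drop k ([x] @ u')"
          using Cons.prems v yx by auto
      qed simp
      then have "shc (x # u') v' (u' @ v) = 0" using shc_zero_if_gt v yx by fastforce
      then show ?thesis by simp
    next
      assume "\<exists>z. x # u' = v @ z"
      then obtain z where z: "x # u' = v @ z" by blast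
      then have u'z: "u' = v' @ z" using v by simp
      show ?thesis
      proof (cases "v' = []")
        case True then show ?thesis by simp
      next
        case False
        have A: "\<forall>k < length v'. sgt (drop k v') (x # u')"
          using vsuf z sgt_app[of _ v "[]" z] by (metis append_Nil2)
        have mxe: "mx v' (x # u') = v' @ (x # u')"
          by (rule mx_concat) (use A sgt_less less_imp_le in blast)
        have zsuf: "\<forall>k < length z. v \<le> drop k z"
        proof (intro allI impI)
          fix k assume "k < length z"
          then have "k + length v < length (x # u')" using z by simp
          then have "v \<le> drop (k + length v) (x # u')" using Cons.prems by blast
          moreover have "drop (k + length v) (x # u') = drop k z" by (subst z) simp
          ultimately show "v \<le> drop k z" by metis
        qed
        have "v @ z \<le> z @ v" using BZ[OF zsuf] v by simp
        then have ge: "v' @ (x # u') \<le> u' @ v" using z u'z app_le_mono by fastforce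
        show ?thesis
        proof (cases "v' @ (x # u') = u' @ v")
          case True
          have "shc (x # u') v' (u' @ v) = shc v' (x # u') (v' @ (x # u'))"
            using True shc_sym by metis
          also have "\<dots> = 1" using N_one[OF A] .
          finally show ?thesis by simp
        next
          case False
          then have "mx v' (x # u') < u' @ v" using ge mxe by simp
          then have "shc v' (x # u') (u' @ v) = 0" by (rule shc_zero_if_gt)
          then show ?thesis by (simp add: shc_sym[of "x # u'" v'])
        qed
      qed
    qed
  qed
  show ?case
  proof (cases "y = x")
    case True then show ?thesis using IH 2 v by simp
  next
    case False then show ?thesis using IH v by simp
  qed
qed


section \<open>Choice of the splitting\<close>

lemma lyndon_lyn: "lyndon w \<longleftrightarrow> lyn w"
  unfolding lyndon_def lyn_def word_less_def list_less_def by simp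

lemma split_exists:
  assumes ne: "(w::'a::linorder list) \<noteq> []" and nl: "\<not> lyn w"
  shows "\<exists>u v. w = u @ v \<and> u \<noteq> [] \<and> lyn v \<and> (\<forall>k < length u. v \<le> drop k u)"
proof -
  define S where "S = (\<lambda>k. drop k w) ` {..<length w}"
  have finS: "finite S" and neS: "S \<noteq> {}" using ne unfolding S_def by auto
  define v where "v = Min S"
  have vS: "v \<in> S" using finS neS v_def by simp
  then obtain k0 where k0: "k0 < length w" "v = drop k0 w" unfolding S_def by auto
  have vmin: "\<And>k. k < length w \<Longrightarrow> v \<le> drop k w"
    using finS v_def unfolding S_def by auto
  define u where "u = take k0 w"
  have w: "w = u @ v" using k0 u_def by simp
  have vne: "v \<noteq> []" using k0 by simp
  have lv: "lyn v"
    unfolding lyn_def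
  proof (intro conjI allI impI)
    show "v \<noteq> []" by (rule vne)
    fix j assume j: "0 < j \<and> j < length v"
    have "k0 + j < length w" using j k0 by simp linarith
    then have "v \<le> drop (k0 + j) w" using vmin by blast
    moreover have "drop j v = drop (k0 + j) w" using k0 by (simp add: add.commute)
    moreover have "v \<noteq> drop j v"
    proof
      assume "v = drop j v"
      then have "length v = length v - j" by (metis length_drop)
      then show False using j by linarith
    qed
    ultimately show "v < drop j v" by simp
  qed
  have une: "u \<noteq> []"
  proof
    assume "u = []" then have "v = w" using w by simp
    then show False using lv nl by simp
  qed
  have suf: "\<forall>k < length u. v \<le> drop k u"
  proof (intro allI impI)
    fix k assume k: "k < length u"
    define t where "t = drop k u"
    have tne: "t \<noteq> []" using k t_def by simp
    have tv: "t @ v = drop k w" using w k t_def by simp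
    have vtv: "v \<le> t @ v" using vmin[of k] tv k w by simp
    show "v \<le> drop k u"
    proof (rule ccontr)
      assume "\<not> v \<le> drop k u"
      then have "t < v" using t_def by simp
      then have "sgt v t \<or> (\<exists>z. z \<noteq> [] \<and> v = t @ z)" using less_cases by blast
      then show False
      proof
        assume "sgt v t"
        then have "t @ v < v @ []" using sgt_app_less by blast
        then show False using vtv by simp
      next
        assume "\<exists>z. z \<noteq> [] \<and> v = t @ z"
        then obtain z where z: "z \<noteq> []" "v = t @ z" by blast
        have "z = drop (k0 + length t) w" using z k0 by (metis add.commute drop_drop drop_append append_eq_conv_conj)
        moreover have "k0 + length t < length w" using z k0 by (metis add.commute drop_drop length_drop zero_less_diff length_greater_0_conv calculation)
        ultimately have "v \<le> z" using vmin by simp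
        moreover have "t @ z \<le> t @ (t @ z)" using vtv z by simp
        then have "z \<le> t @ z" by (rule app_le_cancel)
        ultimately have "v = z" using z by simp
        then show False using z tne by (metis append_self_conv2 append_same_eq self_append_conv)
      qed
    qed
  qed
  show ?thesis using w une lv suf by blast
qed

lemma zspan_neg: "f \<in> zspan S \<Longrightarrow> (\<lambda>x. - f x) \<in> zspan S"
  using zspan.smult[of f S "-1"] by simp

lemma zspan_sum:
  assumes "finite F" "\<forall>x\<in>F. g x \<in> zspan S"
  shows "(\<lambda>y. \<Sum>x\<in>F. c x * g x y) \<in> zspan S"
  using assms
proof (induction F rule: finite_induct)
  case empty then show ?case using zspan.zero by simp
next
  case (insert a F)
  have "(\<lambda>y. c a * g a y) \<in> zspan S" using insert zspan.smult by blast
  moreover have "(\<lambda>y. \<Sum>x\<in>F. c x * g x y) \<in> zspan S" using insert by blast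
  ultimately have "(\<lambda>y. c a * g a y + (\<Sum>x\<in>F. c x * g x y)) \<in> zspan S" by (rule zspan.add)
  then show ?case using insert by simp
qed

lemma zspan_eq: "f \<in> zspan S \<Longrightarrow> f = g \<Longrightarrow> g \<in> zspan S" by simp

lemma coprime_small:
  assumes "prime (p::nat)" "0 < c" "c < p"
  shows "gcd (int c) (int p) = 1"
proof -
  have "gcd c p dvd p" by simp
  then have "gcd c p = 1 \<or> gcd c p = p" using assms(1) prime_nat_iff by blast
  moreover have "gcd c p \<noteq> p"
  proof
    assume "gcd c p = p" then have "p dvd c" by (metis gcd_dvd1)
    then show False using assms by (simp add: nat_dvd_not_less)
  qed
  ultimately have "gcd c p = 1" by simp
  then show ?thesis by (metis gcd_int_int_eq of_nat_1)
qed


lemma shuffle_decomp: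
  fixes u v w :: "'a::linorder list"
  assumes w: "w = u @ v" and mxw: "mx u v = w"
  defines "D \<equiv> {x. set x \<subseteq> set w \<and> length x = length w \<and> x < w}"
  shows "shuffle u v = (\<lambda>y. int (shc u v w) * wordvec w y + (\<Sum>x\<in>D. int (shc u v x) * wordvec x y))"
proof
  fix y
  have finD: "finite D" unfolding D_def
    by (rule finite_subset[OF _ finite_lists_length_eq[OF finite_set[of w], of "length w"]]) auto
  have sumD: "(\<Sum>x\<in>D. int (shc u v x) * wordvec x y) = (if y \<in> D then int (shc u v y) else 0)"
  proof -
    have "(\<Sum>x\<in>D. int (shc u v x) * wordvec x y) = (\<Sum>x\<in>D. if x = y then int (shc u v x) else 0)"
      by (rule sum.cong) (auto simp: wordvec_def)
    also have "\<dots> = (if y \<in> D then int (shc u v y) else 0)"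
      using finD by (simp add: sum.delta')
    finally show ?thesis .
  qed
  have wD: "w \<notin> D" unfolding D_def by simp
  show "shuffle u v y = int (shc u v w) * wordvec w y + (\<Sum>x\<in>D. int (shc u v x) * wordvec x y)"
  proof (cases "y = w")
    case True then show ?thesis using sumD wD by (simp add: shuffle_def wordvec_def)
  next
    case False
    show ?thesis
    proof (cases "y \<in> D")
      case True then show ?thesis using sumD False by (simp add: shuffle_def wordvec_def)
    next
      case nD: False
      have "shc u v y = 0"
      proof (rule ccontr)
        assume nz: "shc u v y \<noteq> 0"
        then have "mset y = mset u + mset v" by (rule shc_mset)
        then have ms: "mset y = mset w" using w by simp
        then have "set y = set w" by (metis set_mset_mset)
        moreover have "length y = length w" using ms by (metis size_mset)
        moreover have "y < w" using shc_le_mx[OF nz] mxw False by simp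
        ultimately have "y \<in> D" unfolding D_def by simp
        then show False using nD by simp
      qed
      then show ?thesis using sumD False nD by (simp add: shuffle_def wordvec_def)
    qed
  qed
qed

theorem proposition6p2:
  fixes p :: nat and s :: nat
  assumes "prime p" and "1 \<le> s" and "s < p"
  shows "\<forall>w :: 'a::linorder list. length w = s \<longrightarrow>
           wordvec w \<in> zspan ({wordvec l | l. lyndon l \<and> length l = s}
                              \<union> shuffle_gens \<union> p_multiples p)"
proof -
  define Sg :: "('a list \<Rightarrow> int) set" where
    "Sg = {wordvec l | l. lyndon l \<and> length l = s} \<union> shuffle_gens \<union> p_multiples p"
  define Dw :: "'a list \<Rightarrow> 'a list set" where
    "Dw = (\<lambda>w. {x. set x \<subseteq> set w \<and> length x = length w \<and> x < w})"
  have finD: "\<And>w. finite (Dw w)" unfolding Dw_def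
    by (rule finite_subset[OF _ finite_lists_length_eq[OF finite_set]]) auto
  have main: "\<forall>w :: 'a list. length w = s \<longrightarrow> card (Dw w) = n \<longrightarrow> wordvec w \<in> zspan Sg" for n
  proof (induction n rule: less_induct)
    case (less n)
    show ?case
    proof (intro allI impI)
      fix w :: "'a list"
      assume ls: "length w = s" and cn: "card (Dw w) = n"
      show "wordvec w \<in> zspan Sg"
      proof (cases "lyn w")
        case True
        then have "wordvec w \<in> Sg" unfolding Sg_def using ls lyndon_lyn by blast
        then show ?thesis by (rule zspan.base)
      next
        case False
        have wne: "w \<noteq> []" using ls assms(2) by auto
        obtain u v where uv: "w = u @ v" "u \<noteq> []" "lyn v" "\<forall>k < length u. v \<le> drop k u"
          using split_exists[OF wne False] by blast
        have vne: "v \<noteq> []" using uv(3) unfolding lyn_def by simp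
        have mxw: "mx u v = w" using mx_concat[OF uv(4)] uv(1) by simp
        define c where "c = shc u v w"
        have c1: "1 \<le> c" using shc_app_pos uv(1) c_def by simp
        have c2: "c \<le> length u + 1" using count_bound[OF uv(3) uv(4)] uv(1) c_def by simp
        have "length u + 1 \<le> s" using ls uv(1) vne by (cases v) auto
        then have cp: "c < p" using c2 assms(3) by linarith
        have shS: "shuffle u v \<in> zspan Sg"
          unfolding Sg_def shuffle_gens_def using uv(2) vne by (intro zspan.base) blast
        have dec: "shuffle u v = (\<lambda>y. int c * wordvec w y + (\<Sum>x\<in>Dw w. int (shc u v x) * wordvec x y))"
          using shuffle_decomp[OF uv(1) mxw] unfolding c_def Dw_def by simp
        have IHs: "\<forall>x\<in>Dw w. wordvec x \<in> zspan Sg"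
        proof
          fix x assume xD: "x \<in> Dw w"
          have lx: "length x = s" using xD ls unfolding Dw_def by simp
          have sub: "Dw x \<subset> Dw w"
          proof
            show "Dw x \<subseteq> Dw w" using xD unfolding Dw_def by auto
            show "Dw x \<noteq> Dw w" using xD unfolding Dw_def by auto
          qed
          then have "card (Dw x) < n" using cn psubset_card_mono[OF finD sub] by simp
          then show "wordvec x \<in> zspan Sg" using less.IH lx by blast
        qed
        have T: "(\<lambda>y. \<Sum>x\<in>Dw w. int (shc u v x) * wordvec x y) \<in> zspan Sg"
          by (rule zspan_sum[OF finD IHs])
        have cw: "(\<lambda>y. int c * wordvec w y) \<in> zspan Sg"
        proof -
          have "(\<lambda>y. shuffle u v y + (- (\<Sum>x\<in>Dw w. int (shc u v x) * wordvec x y))) \<in> zspan Sg"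
            using zspan.add[OF shS zspan_neg[OF T]] by simp
          moreover have "(\<lambda>y. shuffle u v y + (- (\<Sum>x\<in>Dw w. int (shc u v x) * wordvec x y)))
                = (\<lambda>y. int c * wordvec w y)"
            by (subst dec) simp
          ultimately show ?thesis by simp
        qed
        have pw: "(\<lambda>y. int p * wordvec w y) \<in> zspan Sg"
          unfolding Sg_def p_multiples_def by (intro zspan.base) blast
        have g: "gcd (int c) (int p) = 1" using coprime_small[OF assms(1)] c1 cp by simp
        obtain a b where ab: "a * int c + b * int p = 1" using bezout_int[of "int c" "int p"] g by auto
        have "(\<lambda>y. a * (int c * wordvec w y) + b * (int p * wordvec w y)) \<in> zspan Sg"
          using zspan.add[OF zspan.smult[OF cw] zspan.smult[OF pw]] by simp
        moreover have "(\<lambda>y. a * (int c * wordvec w y) + b * (int p * wordvec w y)) = wordvec w"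
        proof
          fix y
          have "a * (int c * wordvec w y) + b * (int p * wordvec w y) = (a * int c + b * int p) * wordvec w y"
            by (simp add: algebra_simps)
          then show "a * (int c * wordvec w y) + b * (int p * wordvec w y) = wordvec w y" using ab by simp
        qed
        ultimately show ?thesis by simp
      qed
    qed
  qed
  show ?thesis using main unfolding Sg_def by blast
qed

end
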